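(* In any one-dimensional robot game $(U,V)$, if two counter values $x,y\in\mathbb{Z}$ are winning, then $x+y$ is winning.
   Context: A robot game in dimension one is a pair $(U,V)$ of finite nonempty subsets of $\mathbb{Z}$; $U$ belongs to the reacher and $V$ to the opponent. From an initial counter value $x_0\in\mathbb{Z}$, a play proceeds in rounds: in a round starting at counter value $x$, the opponent chooses $v\in V$ and the counter becomes $x+v$, then the reacher chooses $u\in U$ and the counter becomes $x+v+u$, where the round ends. The reacher wins the play if some round ends at $0$; by convention the reacher wins immediately if the play starts at $0$. Strategies are functions from play prefixes to moves. A counter value $x$ is winning if the reacher has a strategy such that, against every opponent strategy, the play from $x$ is won by the reacher. *)

theory Defs
  imports Main
begin

text \<open>A play prefix is the chronological list of all counter values visited so far:
  [x0, x0+v1, x0+v1+u1, x0+v1+u1+v2, ...]. Strategies map play prefixes to moves.\<close>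

type_synonym strategy = "int list \<Rightarrow> int"

fun play_hist :: "strategy \<Rightarrow> strategy \<Rightarrow> int \<Rightarrow> nat \<Rightarrow> int list" where
  "play_hist s t x0 0 = [x0]"
| "play_hist s t x0 (Suc n) =
     (let h = play_hist s t x0 n;
          h' = h @ [last h + t h]
      in h' @ [last h' + s h'])"

definition valid_strategy :: "int set \<Rightarrow> strategy \<Rightarrow> bool" where
  "valid_strategy M f \<longleftrightarrow> (\<forall>h. f h \<in> M)"

text \<open>The reacher wins the play if it starts at 0 or some round ends at 0.\<close>
definition reacher_wins_play :: "strategy \<Rightarrow> strategy \<Rightarrow> int \<Rightarrow> bool" where
  "reacher_wins_play s t x0 \<longleftrightarrow> (\<exists>n. last (play_hist s t x0 n) = 0)"

definition winning :: "int set \<Rightarrow> int set \<Rightarrow> int \<Rightarrow> bool" where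
  "winning U V x \<longleftrightarrow>
     (\<exists>s. valid_strategy U s \<and>
        (\<forall>t. valid_strategy V t \<longrightarrow> reacher_wins_play s t x))"

end

theory Submission
  imports Defs
begin

lemma ph_len: "length (play_hist s t x0 n) = 2*n+1"
  by (induction n) (auto simp: Let_def)

lemma ph_ne: "play_hist s t x0 n \<noteq> []"
  using ph_len[of s t x0 n] by auto

lemma ph_prefix: "\<exists>r. play_hist s t x0 (m+d) = play_hist s t x0 m @ r"
  by (induction d) (auto simp: Let_def)

lemma ph_nth: assumes "k \<le> n" shows "play_hist s t x0 n ! (2*k) = last (play_hist s t x0 k)"
proof -
  obtain r where r: "play_hist s t x0 n = play_hist s t x0 k @ r"
    using ph_prefix[of s t x0 k "n-k"] assms by auto
  have "play_hist s t x0 n ! (2*k) = play_hist s t x0 k ! (2*k)"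
    unfolding r by (simp add: nth_append ph_len)
  also have "\<dots> = last (play_hist s t x0 k)"
    using ph_len[of s t x0 k] ph_ne[of s t x0 k] by (simp add: last_conv_nth)
  finally show ?thesis .
qed

lemma ph_hd: "play_hist s t x0 n ! 0 = x0"
  using ph_nth[of 0 n s t x0] by simp

theorem proposition1:
  fixes U V :: "int set" and x y :: int
  assumes "finite U" "U \<noteq> {}" "finite V" "V \<noteq> {}"
    and "winning U V x" and "winning U V y"
  shows "winning U V (x + y)"
proof -
  obtain sx where sxv: "valid_strategy U sx" and sxw: "\<And>t. valid_strategy V t \<Longrightarrow> reacher_wins_play sx t x"
    using assms(5) unfolding winning_def by blast
  obtain sy where syv: "valid_strategy U sy" and syw: "\<And>t. valid_strategy V t \<Longrightarrow> reacher_wins_play sy t y"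
    using assms(6) unfolding winning_def by blast
  define P where "P h k \<longleftrightarrow> k < length h \<and> even k \<and> h!k = y" for h :: "int list" and k
  define sc :: strategy where "sc h = (if \<exists>k. P h k then sy (drop (LEAST k. P h k) h)
      else sx (map (\<lambda>z. z - y) h))" for h
  have scv: "valid_strategy U sc" using sxv syv unfolding valid_strategy_def sc_def by auto
  show ?thesis unfolding winning_def
  proof (intro exI conjI allI impI, fact scv)
    fix t assume tv: "valid_strategy V t"
    define tx :: strategy where "tx h = t (map (\<lambda>z. z + y) h)" for h
    have txv: "valid_strategy V tx" using tv unfolding valid_strategy_def tx_def by auto
    define Px where "Px = play_hist sx tx x"
    define Pc where "Pc = play_hist sc t (x+y)"
    have ex: "\<exists>n. last (Px n) = 0" using sxw[OF txv] unfolding reacher_wins_play_def Px_def .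
    define N where "N = (LEAST n. last (Px n) = 0)"
    have PxN: "last (Px N) = 0" unfolding N_def using ex by (rule LeastI_ex)
    have Pxlt: "j < N \<Longrightarrow> last (Px j) \<noteq> 0" for j unfolding N_def using not_less_Least by blast
    have ph1: "n \<le> N \<Longrightarrow> Pc n = map (\<lambda>z. z + y) (Px n)" for n
    proof (induction n)
      case 0 then show ?case by (simp add: Pc_def Px_def)
    next
      case (Suc n)
      hence IH: "Pc n = map (\<lambda>z. z + y) (Px n)" by simp
      define q where "q = Px n @ [last (Px n) + tx (Px n)]"
      have lq: "length q = 2*n+2" unfolding q_def Px_def by (simp add: ph_len)
      have h': "Pc n @ [last (Pc n) + t (Pc n)] = map (\<lambda>z. z + y) q"
        using IH ph_ne[of sx tx x n] unfolding q_def tx_def Px_def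
        by (simp add: last_map)
      have nP: "\<not> P (map (\<lambda>z. z + y) q) k" for k
      proof
        assume "P (map (\<lambda>z. z + y) q) k"
        then obtain j where k: "k = 2*j" "k < 2*n+2" and v: "q!k + y = y"
          unfolding P_def using lq by (auto elim: evenE)
        have jn: "j \<le> n" using k by auto
        have "q!k = Px n ! (2*j)" unfolding q_def using k(1) jn
          by (simp add: nth_append Px_def ph_len)
        also have "\<dots> = last (Px j)" unfolding Px_def using jn by (rule ph_nth)
        finally show False using v Pxlt[of j] jn Suc.prems by auto
      qed
      have "map (\<lambda>z. z - y) (map (\<lambda>z. z + y) q) = q" by (simp add: comp_def)
      hence "sc (map (\<lambda>z. z + y) q) = sx q" using nP unfolding sc_def by auto
      moreover have "Pc (Suc n) = (Pc n @ [last (Pc n) + t (Pc n)]) @ [last (Pc n @ [last (Pc n) + t (Pc n)]) + sc (Pc n @ [last (Pc n) + t (Pc n)])]"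
        unfolding Pc_def by (simp add: Let_def)
      moreover have "Px (Suc n) = q @ [last q + sx q]" unfolding Px_def q_def by (simp add: Let_def)
      moreover have "q \<noteq> []" unfolding q_def by simp
      ultimately show ?case using h' by (simp add: last_map)
    qed
    define H where "H = Pc N"
    have HN: "H = map (\<lambda>z. z + y) (Px N)" unfolding H_def using ph1 by simp
    have lH: "length H = 2*N+1" unfolding HN Px_def by (simp add: ph_len)
    have Hk: "j \<le> N \<Longrightarrow> H ! (2*j) = last (Px j) + y" for j
      unfolding HN Px_def using ph_nth[of j N sx tx x] by (simp add: ph_len)
    define pre where "pre = take (2*N) H"
    define ty :: strategy where "ty h = t (pre @ h)" for h
    have tyv: "valid_strategy V ty" using tv unfolding valid_strategy_def ty_def by auto
    define Py where "Py = play_hist sy ty y"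
    have ph2: "Pc (N + m) = pre @ Py m" for m
    proof (induction m)
      case 0
      have "H = pre @ [last H]"
      proof -
        have "H \<noteq> []" using lH by auto
        hence "H = butlast H @ [last H]" by simp
        moreover have "butlast H = pre" unfolding pre_def butlast_conv_take using lH by (simp add: algebra_simps)
        ultimately show ?thesis by simp
      qed
      moreover have "last H = y"
      proof -
        have "H \<noteq> []" using lH by auto
        hence "last H = H ! (length H - 1)" by (rule last_conv_nth)
        also have "length H - 1 = 2*N" using lH by simp
        finally show ?thesis using Hk[of N] PxN by simp
      qed
      ultimately show ?case by (simp add: H_def Py_def)
    next
      case (Suc m)
      define q where "q = Py m @ [last (Py m) + ty (Py m)]"
      have q0: "q ! 0 = y" unfolding q_def Py_def using ph_hd[of sy ty y m] ph_ne[of sy ty y m]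
        by (simp add: nth_append)
      have lpre: "length pre = 2*N" unfolding pre_def using lH by simp
      have h': "Pc (N+m) @ [last (Pc (N+m)) + t (Pc (N+m))] = pre @ q"
        using Suc.IH ph_ne[of sy ty y m] unfolding q_def ty_def Py_def by simp
      have Pk: "P (pre @ q) (2*N)" unfolding P_def using lpre q0 by (simp add: nth_append q_def)
      have least: "(LEAST k. P (pre @ q) k) = 2*N"
      proof (rule Least_equality[where P="P (pre @ q)", OF Pk])
        fix k assume "P (pre @ q) k"
        show "2*N \<le> k"
        proof (rule ccontr)
          assume "\<not> 2*N \<le> k"
          then obtain j where k: "k = 2*j" "j < N" using \<open>P (pre @ q) k\<close> unfolding P_def
            by (auto elim: evenE)
          have "(pre @ q) ! k = H ! (2*j)" using k lpre unfolding pre_def by (simp add: nth_append)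
          also have "\<dots> = last (Px j) + y" using Hk k by simp
          finally show False using \<open>P (pre @ q) k\<close> Pxlt[OF k(2)] unfolding P_def by simp
        qed
      qed
      have "sc (pre @ q) = sy q" unfolding sc_def using Pk least lpre by auto
      moreover have "Pc (Suc (N+m)) = (Pc (N+m) @ [last (Pc (N+m)) + t (Pc (N+m))]) @ [last (Pc (N+m) @ [last (Pc (N+m)) + t (Pc (N+m))]) + sc (Pc (N+m) @ [last (Pc (N+m)) + t (Pc (N+m))])]"
        unfolding Pc_def by (simp add: Let_def)
      moreover have "Py (Suc m) = q @ [last q + sy q]" unfolding Py_def q_def by (simp add: Let_def)
      ultimately show ?case using h' by (simp add: q_def)
    qed
    obtain m where "last (Py m) = 0" using syw[OF tyv] unfolding reacher_wins_play_def Py_def by blast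
    hence "last (Pc (N+m)) = 0" using ph2[of m] ph_ne[of sy ty y m] unfolding Py_def by simp
    thus "reacher_wins_play sc t (x + y)" unfolding reacher_wins_play_def Pc_def by blast
  qed
qed

end
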